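(* Let $H$ be a complex separable Hilbert space and let $S,T,X\in B(H)$ with $S$ and $T$ positive. Then $$\|SX-XT\|_2\le\|X\|_2\left(\|S\|_2^2+\|T\|_2^2\right)^{1/2}.$$
   Context: $\|\cdot\|_2$ denotes the Hilbert–Schmidt norm $\|Z\|_2=(\operatorname{tr}(Z^*Z))^{1/2}$ (possibly $+\infty$). *)

theory Defs
  imports "HOL-Analysis.Analysis"
begin

text \<open>Model of a complex separable Hilbert space: l2(I) for a countable index type I
  (finite I gives C^n, infinite I gives l2(N)); every complex separable Hilbert space is
  unitarily isomorphic to one of these, and all notions below are unitarily invariant.\<close>

definition l2 :: "('i \<Rightarrow> complex) set" where
  "l2 = {x. (\<lambda>i. (cmod (x i))\<^sup>2) summable_on UNIV}"

definition l2_inner :: "('i \<Rightarrow> complex) \<Rightarrow> ('i \<Rightarrow> complex) \<Rightarrow> complex" where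
  "l2_inner x y = (\<Sum>\<^sub>\<infinity>i. cnj (x i) * y i)"

definition l2_norm :: "('i \<Rightarrow> complex) \<Rightarrow> real" where
  "l2_norm x = sqrt (\<Sum>\<^sub>\<infinity>i. (cmod (x i))\<^sup>2)"

text \<open>Bounded (complex-linear) operators on l2, i.e. elements of B(H).
  Only the values on l2 matter.\<close>
definition bounded_op :: "(('i \<Rightarrow> complex) \<Rightarrow> ('i \<Rightarrow> complex)) \<Rightarrow> bool" where
  "bounded_op A \<longleftrightarrow>
     (\<forall>x\<in>l2. A x \<in> l2) \<and>
     (\<forall>x\<in>l2. \<forall>y\<in>l2. A (\<lambda>i. x i + y i) = (\<lambda>i. A x i + A y i)) \<and>
     (\<forall>x\<in>l2. \<forall>c::complex. A (\<lambda>i. c * x i) = (\<lambda>i. c * A x i)) \<and>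
     (\<exists>K. \<forall>x\<in>l2. l2_norm (A x) \<le> K * l2_norm x)"

definition positive_op :: "(('i \<Rightarrow> complex) \<Rightarrow> ('i \<Rightarrow> complex)) \<Rightarrow> bool" where
  "positive_op A \<longleftrightarrow> (\<forall>x\<in>l2. Im (l2_inner x (A x)) = 0 \<and> Re (l2_inner x (A x)) \<ge> 0)"

definition basis_vec :: "'i \<Rightarrow> ('i \<Rightarrow> complex)" where
  "basis_vec j = (\<lambda>i. if i = j then 1 else 0)"

text \<open>tr(Z^* Z) computed in the standard orthonormal basis: sum_j ||Z e_j||^2, in [0,\<infinity>].\<close>
definition hs_sq :: "(('i \<Rightarrow> complex) \<Rightarrow> ('i \<Rightarrow> complex)) \<Rightarrow> ennreal" where
  "hs_sq Z = (\<Sum>\<^sub>\<infinity>j. \<Sum>\<^sub>\<infinity>i. ennreal ((cmod (Z (basis_vec j) i))\<^sup>2))"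

definition esqrt :: "ennreal \<Rightarrow> ennreal" where
  "esqrt a = (if a = \<infinity> then \<infinity> else ennreal (sqrt (enn2real a)))"

definition hs_norm :: "(('i \<Rightarrow> complex) \<Rightarrow> ('i \<Rightarrow> complex)) \<Rightarrow> ennreal" where
  "hs_norm Z = esqrt (hs_sq Z)"

end

theory Submission
  imports Defs
begin

definition nr :: "('i \<Rightarrow> complex) \<Rightarrow> real" where
  "nr x = (\<Sum>\<^sub>\<infinity>i. (cmod (x i))\<^sup>2)"

definition nu :: "('i \<Rightarrow> complex) \<Rightarrow> ennreal" where
  "nu x = (\<Sum>\<^sub>\<infinity>i. ennreal ((cmod (x i))\<^sup>2))"

lemma ennreal_infsum_real:
  fixes f :: "'a \<Rightarrow> real"
  assumes "f summable_on A" "\<And>x. x \<in> A \<Longrightarrow> f x \<ge> 0"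
  shows "(\<Sum>\<^sub>\<infinity>x\<in>A. ennreal (f x)) = ennreal (infsum f A)"
proof -
  have "infsum (ennreal \<circ> f) A = ennreal (infsum f A)"
    by (rule infsum_comm_additive_general)
       (use assms in \<open>auto simp: sum_ennreal subset_iff\<close>)
  then show ?thesis by (simp add: o_def)
qed

lemma ennreal_finite_summable:
  fixes f :: "'a \<Rightarrow> real"
  assumes "(\<Sum>\<^sub>\<infinity>x\<in>A. ennreal (f x)) < \<infinity>" "\<And>x. x \<in> A \<Longrightarrow> f x \<ge> 0"
  shows "f summable_on A"
proof (rule nonneg_bdd_above_summable_on)
  show "bdd_above (sum f ` {F. F \<subseteq> A \<and> finite F})"
  proof (rule bdd_aboveI2)
    fix F assume F: "F \<in> {F. F \<subseteq> A \<and> finite F}"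
    have "ennreal (sum f F) = (\<Sum>x\<in>F. ennreal (f x))"
      using F assms(2) by (subst sum_ennreal) auto
    also have "\<dots> = (\<Sum>\<^sub>\<infinity>x\<in>F. ennreal (f x))" using F by simp
    also have "\<dots> \<le> (\<Sum>\<^sub>\<infinity>x\<in>A. ennreal (f x))"
      using F by (intro infsum_mono_neutral) (auto simp: nonneg_summable_on_complete)
    finally have "ennreal (sum f F) \<le> (\<Sum>\<^sub>\<infinity>x\<in>A. ennreal (f x))" .
    then show "sum f F \<le> enn2real (\<Sum>\<^sub>\<infinity>x\<in>A. ennreal (f x))"
    proof -
      have "sum f F \<ge> 0" using F assms(2) by (auto intro: sum_nonneg)
      then have "sum f F = enn2real (ennreal (sum f F))" by simp
      also have "\<dots> \<le> enn2real (\<Sum>\<^sub>\<infinity>x\<in>A. ennreal (f x))"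
        using \<open>ennreal (sum f F) \<le> _\<close> assms(1) by (intro enn2real_mono) auto
      finally show ?thesis .
    qed
  qed
qed (use assms in auto)

lemma l2_nu: "x \<in> l2 \<Longrightarrow> nu x = ennreal (nr x)"
  unfolding l2_def nu_def nr_def by (rule ennreal_infsum_real) auto

lemma nu_l2: "nu x < \<infinity> \<Longrightarrow> x \<in> l2"
  unfolding l2_def nu_def mem_Collect_eq by (rule ennreal_finite_summable) auto

lemma nr_nonneg: "nr x \<ge> 0"
  unfolding nr_def by (rule infsum_nonneg) auto

lemma l2_norm_sq: "(l2_norm x)\<^sup>2 = nr x"
  unfolding l2_norm_def nr_def[symmetric] using nr_nonneg by simp

lemma enn_sum_le_infsum:
  fixes f :: "'a \<Rightarrow> ennreal"
  assumes "finite F" "F \<subseteq> A"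
  shows "sum f F \<le> infsum f A"
proof -
  have "sum f F = infsum f F" using assms by simp
  also have "\<dots> \<le> infsum f A"
    using assms by (intro infsum_mono_neutral) (auto simp: nonneg_summable_on_complete)
  finally show ?thesis .
qed

lemma enn_infsum_finsum:
  fixes f :: "'a \<Rightarrow> 'b \<Rightarrow> ennreal"
  assumes "finite F"
  shows "(\<Sum>x\<in>F. \<Sum>\<^sub>\<infinity>y\<in>B. f x y) = (\<Sum>\<^sub>\<infinity>y\<in>B. \<Sum>x\<in>F. f x y)"
  using assms
proof (induction F rule: finite_induct)
  case empty then show ?case by simp
next
  case (insert a F)
  then show ?case
    by (simp add: infsum_add nonneg_summable_on_complete)
qed

lemma ennreal_swap_le:
  fixes f :: "'a \<Rightarrow> 'b \<Rightarrow> ennreal"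
  shows "(\<Sum>\<^sub>\<infinity>x\<in>A. \<Sum>\<^sub>\<infinity>y\<in>B. f x y) \<le> (\<Sum>\<^sub>\<infinity>y\<in>B. \<Sum>\<^sub>\<infinity>x\<in>A. f x y)"
proof (rule infsum_le_finite_sums)
  show "(\<lambda>x. \<Sum>\<^sub>\<infinity>y\<in>B. f x y) summable_on A" by (simp add: nonneg_summable_on_complete)
  fix F assume F: "finite F" "F \<subseteq> A"
  have "(\<Sum>x\<in>F. \<Sum>\<^sub>\<infinity>y\<in>B. f x y) = (\<Sum>\<^sub>\<infinity>y\<in>B. \<Sum>x\<in>F. f x y)"
    using F(1) by (rule enn_infsum_finsum)
  also have "\<dots> \<le> (\<Sum>\<^sub>\<infinity>y\<in>B. \<Sum>\<^sub>\<infinity>x\<in>A. f x y)"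
    using F by (intro infsum_mono enn_sum_le_infsum) (auto simp: nonneg_summable_on_complete)
  finally show "(\<Sum>x\<in>F. \<Sum>\<^sub>\<infinity>y\<in>B. f x y) \<le> (\<Sum>\<^sub>\<infinity>y\<in>B. \<Sum>\<^sub>\<infinity>x\<in>A. f x y)" .
qed

lemma ennreal_swap:
  fixes f :: "'a \<Rightarrow> 'b \<Rightarrow> ennreal"
  shows "(\<Sum>\<^sub>\<infinity>x\<in>A. \<Sum>\<^sub>\<infinity>y\<in>B. f x y) = (\<Sum>\<^sub>\<infinity>y\<in>B. \<Sum>\<^sub>\<infinity>x\<in>A. f x y)"
  by (rule antisym[OF ennreal_swap_le ennreal_swap_le])


lemma l2_lin:
  assumes "x \<in> l2" "y \<in> l2"
  shows "(\<lambda>i. a * x i + b * y i) \<in> l2"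
proof -
  have sx: "(\<lambda>i. (cmod (x i))\<^sup>2) summable_on UNIV" and sy: "(\<lambda>i. (cmod (y i))\<^sup>2) summable_on UNIV"
    using assms by (auto simp: l2_def)
  have b: "(cmod (a * x i + b * y i))\<^sup>2 \<le> 2 * (cmod a)\<^sup>2 * (cmod (x i))\<^sup>2 + 2 * (cmod b)\<^sup>2 * (cmod (y i))\<^sup>2" for i
  proof -
    have "cmod (a * x i + b * y i) \<le> cmod a * cmod (x i) + cmod b * cmod (y i)"
      by (metis norm_mult norm_triangle_ineq)
    then have "(cmod (a * x i + b * y i))\<^sup>2 \<le> (cmod a * cmod (x i) + cmod b * cmod (y i))\<^sup>2"
      by (simp add: power_mono)
    also have "\<dots> \<le> 2 * (cmod a)\<^sup>2 * (cmod (x i))\<^sup>2 + 2 * (cmod b)\<^sup>2 * (cmod (y i))\<^sup>2"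
    proof -
      have q: "(p + q)\<^sup>2 \<le> 2 * p\<^sup>2 + 2 * q\<^sup>2" for p q :: real
      proof -
        have "0 \<le> (p - q)\<^sup>2" by simp
        then show ?thesis by (simp add: power2_sum power2_diff)
      qed
      show ?thesis using q[of "cmod a * cmod (x i)" "cmod b * cmod (y i)"]
        by (simp add: power_mult_distrib mult.assoc)
    qed
    finally show ?thesis .
  qed
  have "(\<lambda>i. 2 * (cmod a)\<^sup>2 * (cmod (x i))\<^sup>2 + 2 * (cmod b)\<^sup>2 * (cmod (y i))\<^sup>2) summable_on UNIV"
    by (intro summable_on_add summable_on_cmult_right sx sy)
  then have "(\<lambda>i. (cmod (a * x i + b * y i))\<^sup>2) summable_on UNIV"
    by (rule summable_on_comparison_test) (use b in auto)
  then show ?thesis by (simp add: l2_def)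
qed

lemma l2_add: "x \<in> l2 \<Longrightarrow> y \<in> l2 \<Longrightarrow> (\<lambda>i. x i + y i) \<in> l2"
  using l2_lin[of x y 1 1] by simp

lemma l2_diff: "x \<in> l2 \<Longrightarrow> y \<in> l2 \<Longrightarrow> (\<lambda>i. x i - y i) \<in> l2"
  using l2_lin[of x y 1 "-1"] by simp

lemma l2_scale: "x \<in> l2 \<Longrightarrow> (\<lambda>i. c * x i) \<in> l2"
  using l2_lin[of x x c 0] by simp

lemma l2_lin2: "x \<in> l2 \<Longrightarrow> y \<in> l2 \<Longrightarrow> (\<lambda>i. x i + c * y i) \<in> l2"
  using l2_lin[of x y 1 c] by simp

lemma l2_zero: "(\<lambda>i. 0) \<in> l2"
  by (simp add: l2_def)

lemma l2_basis: "basis_vec j \<in> l2"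
  unfolding l2_def mem_Collect_eq
  by (rule finite_nonzero_values_imp_summable_on) (rule finite_subset[of _ "{j}"], auto simp: basis_vec_def)

lemma l2_mono: "y \<in> l2 \<Longrightarrow> (\<And>i. cmod (x i) \<le> cmod (y i)) \<Longrightarrow> x \<in> l2"
  unfolding l2_def mem_Collect_eq
  by (erule summable_on_comparison_test) (auto intro: power_mono)

lemma ip_abs_summable:
  assumes "x \<in> l2" "y \<in> l2"
  shows "(\<lambda>i. norm (cnj (x i) * y i)) summable_on UNIV"
proof -
  have "(\<lambda>i. (cmod (x i))\<^sup>2 + (cmod (y i))\<^sup>2) summable_on UNIV"
    using assms by (intro summable_on_add) (auto simp: l2_def)
  then show ?thesis
  proof (rule summable_on_comparison_test)
    fix i
    have "0 \<le> (cmod (x i) - cmod (y i))\<^sup>2" by simp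
    then have "2 * (cmod (x i) * cmod (y i)) \<le> (cmod (x i))\<^sup>2 + (cmod (y i))\<^sup>2"
      by (simp add: power2_diff)
    moreover have "0 \<le> cmod (x i) * cmod (y i)" by simp
    ultimately have "cmod (x i) * cmod (y i) \<le> (cmod (x i))\<^sup>2 + (cmod (y i))\<^sup>2"
      by linarith
    then show "norm (cnj (x i) * y i) \<le> (cmod (x i))\<^sup>2 + (cmod (y i))\<^sup>2"
      by (simp add: norm_mult)
  qed simp
qed

lemma ip_summable:
  assumes "x \<in> l2" "y \<in> l2"
  shows "(\<lambda>i. cnj (x i) * y i) summable_on UNIV"
  using ip_abs_summable[OF assms] by (rule abs_summable_summable)

lemma ip_sesq:
  assumes "x \<in> l2" "y \<in> l2" "z \<in> l2" "w \<in> l2"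
  shows "l2_inner (\<lambda>i. x i + c * y i) (\<lambda>i. z i + d * w i)
       = l2_inner x z + d * l2_inner x w + cnj c * l2_inner y z + cnj c * d * l2_inner y w"
proof -
  have e: "cnj (x i + c * y i) * (z i + d * w i) =
     ((cnj (x i) * z i + d * (cnj (x i) * w i)) + cnj c * (cnj (y i) * z i)) + (cnj c * d) * (cnj (y i) * w i)" for i
    by (simp add: algebra_simps)
  have s1: "(\<lambda>i. cnj (x i) * z i) summable_on UNIV" "(\<lambda>i. cnj (x i) * w i) summable_on UNIV"
     "(\<lambda>i. cnj (y i) * z i) summable_on UNIV" "(\<lambda>i. cnj (y i) * w i) summable_on UNIV"
    using assms by (auto intro: ip_summable)
  show ?thesis
    unfolding l2_inner_def e
    using s1
    by (simp add: infsum_add summable_on_add summable_on_cmult_right infsum_cmult_right)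
qed

lemma ip_self:
  assumes "x \<in> l2"
  shows "l2_inner x x = complex_of_real (nr x)"
proof (rule complex_eqI)
  have s: "(\<lambda>i. cnj (x i) * x i) summable_on UNIV" using ip_summable[OF assms assms] .
  have "Re (l2_inner x x) = (\<Sum>\<^sub>\<infinity>i. Re (cnj (x i) * x i))"
    unfolding l2_inner_def using infsum_Re[OF s] by simp
  also have "\<dots> = nr x"
    unfolding nr_def
    by (rule infsum_cong) (metis Re_complex_of_real complex_norm_square mult.commute)
  finally show "Re (l2_inner x x) = Re (complex_of_real (nr x))" by simp
  have "Im (l2_inner x x) = (\<Sum>\<^sub>\<infinity>i. Im (cnj (x i) * x i))"
    unfolding l2_inner_def using infsum_Im[OF s] by simp
  also have "\<dots> = 0"
    by (simp add: mult.commute)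
  finally show "Im (l2_inner x x) = Im (complex_of_real (nr x))" by simp
qed

lemma ip_basis: "l2_inner (basis_vec k) v = v k"
proof -
  have "l2_inner (basis_vec k) v = (\<Sum>\<^sub>\<infinity>i\<in>{k}. cnj (basis_vec k i) * v i)"
    unfolding l2_inner_def by (rule infsum_cong_neutral) (auto simp: basis_vec_def)
  then show ?thesis by (simp add: basis_vec_def)
qed

lemma real_cs_aux:
  fixes p X Y :: real
  assumes "p \<ge> 0" "X \<ge> 0" "Y \<ge> 0" "\<And>s. s > 0 \<Longrightarrow> p \<le> (s * X + Y / s) / 2"
  shows "p\<^sup>2 \<le> X * Y"
proof (cases "X > 0 \<and> Y > 0")
  case True
  define s where "s = sqrt Y / sqrt X"
  have sp: "s > 0" using True by (simp add: s_def)
  have "s * X = sqrt X * sqrt Y" using True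
    by (simp add: s_def field_simps) 
  moreover have "Y / s = sqrt X * sqrt Y" using True
    by (simp add: s_def field_simps)
  ultimately have "p \<le> sqrt X * sqrt Y" using assms(4)[OF sp] by simp
  then have "p\<^sup>2 \<le> (sqrt X * sqrt Y)\<^sup>2" using assms(1) by (simp add: power_mono)
  then show ?thesis using assms by (simp add: power_mult_distrib)
next
  case False
  have "p = 0"
  proof (rule ccontr)
    assume "p \<noteq> 0" then have pp: "p > 0" using assms(1) by simp
    show False
    proof (cases "X = 0")
      case True
      define s where "s = (Y + 1) / p"
      have sp: "s > 0" using pp assms by (simp add: s_def)
      have "p \<le> Y / s / 2" using assms(4)[OF sp] True by simp
      also have "\<dots> = Y * p / (2 * (Y + 1))" using pp assms by (simp add: s_def field_simps)
      also have "\<dots> < p"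
      proof -
        have d: "0 < 2 * (Y + 1)" using assms(3) by simp
        have h: "0 < p * (Y + 2)" using pp assms(3) by simp
        have "Y * p < p * (2 * (Y + 1))" using h by (simp add: algebra_simps)
        then show ?thesis using d by (simp add: pos_divide_less_eq)
      qed
      finally show False by simp
    next
      case XF: False
      then have "Y = 0" using False assms by auto
      define s where "s = p / (X + 1)"
      have sp: "s > 0" using pp assms by (simp add: s_def)
      have "p \<le> s * X / 2" using assms(4)[OF sp] \<open>Y = 0\<close> by simp
      also have "\<dots> = p * X / (2 * (X + 1))" using pp assms by (simp add: s_def field_simps)
      also have "\<dots> < p"
      proof -
        have d: "0 < 2 * (X + 1)" using assms(2) by simp
        have h: "0 < p * (X + 2)" using pp assms(2) by simp
        have "p * X < p * (2 * (X + 1))" using h by (simp add: algebra_simps)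
        then show ?thesis using d by (simp add: pos_divide_less_eq)
      qed
      finally show False by simp
    qed
  qed
  then show ?thesis using assms by simp
qed

lemma ip_cs:
  assumes "x \<in> l2" "y \<in> l2"
  shows "(cmod (l2_inner x y))\<^sup>2 \<le> nr x * nr y"
proof (rule real_cs_aux)
  have sx: "(\<lambda>i. (cmod (x i))\<^sup>2) summable_on UNIV" and sy: "(\<lambda>i. (cmod (y i))\<^sup>2) summable_on UNIV"
    using assms by (auto simp: l2_def)
  have as: "(\<lambda>i. norm (cnj (x i) * y i)) summable_on UNIV" using assms by (rule ip_abs_summable)
  show "0 \<le> cmod (l2_inner x y)" by simp
  show "0 \<le> nr x" "0 \<le> nr y" by (rule nr_nonneg)+
  fix s :: real assume s: "s > 0"
  have "cmod (l2_inner x y) \<le> (\<Sum>\<^sub>\<infinity>i. cmod (cnj (x i) * y i))"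
    unfolding l2_inner_def by (rule norm_infsum_bound[OF as])
  also have "\<dots> \<le> (\<Sum>\<^sub>\<infinity>i. (s/2) * (cmod (x i))\<^sup>2 + (1/(2 * s)) * (cmod (y i))\<^sup>2)"
  proof (rule infsum_mono)
    show "(\<lambda>i. cmod (cnj (x i) * y i)) summable_on UNIV" using as by simp
    show "(\<lambda>i. (s/2) * (cmod (x i))\<^sup>2 + (1/(2 * s)) * (cmod (y i))\<^sup>2) summable_on UNIV"
      using sx sy by (intro summable_on_add summable_on_cmult_right)
    fix i
    have "0 \<le> (s * cmod (x i) - cmod (y i))\<^sup>2 / s" using s by simp
    also have "\<dots> = s * (cmod (x i))\<^sup>2 + (1/s) * (cmod (y i))\<^sup>2 - 2 * (cmod (x i) * cmod (y i))"
      using s by (simp add: power2_eq_square field_simps)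
    finally have "cmod (x i) * cmod (y i) \<le> (s/2) * (cmod (x i))\<^sup>2 + (1/(2 * s)) * (cmod (y i))\<^sup>2"
      by simp
    then show "cmod (cnj (x i) * y i) \<le> (s/2) * (cmod (x i))\<^sup>2 + (1/(2 * s)) * (cmod (y i))\<^sup>2"
      by (simp add: norm_mult)
  qed
  also have "\<dots> = (s/2) * nr x + (1/(2 * s)) * nr y"
    unfolding nr_def using sx sy
    by (subst infsum_add) (auto intro: summable_on_cmult_right simp only: infsum_cmult_right)
  also have "\<dots> = (s * nr x + nr y / s) / 2" by (simp add: field_simps)
  finally show "cmod (l2_inner x y) \<le> (s * nr x + nr y / s) / 2" .
qed


definition lin :: "(('i \<Rightarrow> complex) \<Rightarrow> ('i \<Rightarrow> complex)) \<Rightarrow> bool" where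
  "lin A \<longleftrightarrow> (\<forall>x\<in>l2. A x \<in> l2) \<and>
     (\<forall>x\<in>l2. \<forall>y\<in>l2. A (\<lambda>i. x i + y i) = (\<lambda>i. A x i + A y i)) \<and>
     (\<forall>x\<in>l2. \<forall>c. A (\<lambda>i. c * x i) = (\<lambda>i. c * A x i)) \<and>
     (\<exists>K. \<forall>x\<in>l2. nr (A x) \<le> K * nr x)"

lemma bounded_lin: "bounded_op A \<Longrightarrow> lin A"
proof -
  assume b: "bounded_op A"
  then obtain K where K: "\<forall>x\<in>l2. l2_norm (A x) \<le> K * l2_norm x"
    unfolding bounded_op_def by blast
  have "nr (A x) \<le> K\<^sup>2 * nr x" if x: "x \<in> l2" for x
  proof -
    have "0 \<le> l2_norm (A x)" unfolding l2_norm_def nr_def[symmetric] using nr_nonneg by simp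
    then have "(l2_norm (A x))\<^sup>2 \<le> (K * l2_norm x)\<^sup>2"
      using K x by (intro power_mono) auto
    then show ?thesis by (simp add: l2_norm_sq power_mult_distrib)
  qed
  then show ?thesis using b unfolding lin_def bounded_op_def by blast
qed

lemma lin_l2: "lin A \<Longrightarrow> x \<in> l2 \<Longrightarrow> A x \<in> l2"
  unfolding lin_def by blast

lemma lin_add: "lin A \<Longrightarrow> x \<in> l2 \<Longrightarrow> y \<in> l2 \<Longrightarrow> A (\<lambda>i. x i + y i) = (\<lambda>i. A x i + A y i)"
  unfolding lin_def by blast

lemma lin_scale: "lin A \<Longrightarrow> x \<in> l2 \<Longrightarrow> A (\<lambda>i. c * x i) = (\<lambda>i. c * A x i)"
  unfolding lin_def by blast

lemma lin_comb:
  assumes "lin A" "x \<in> l2" "y \<in> l2"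
  shows "A (\<lambda>i. x i + c * y i) = (\<lambda>i. A x i + c * A y i)"
proof -
  have "A (\<lambda>i. x i + c * y i) = (\<lambda>i. A x i + A (\<lambda>i. c * y i) i)"
    using assms by (intro lin_add) (auto intro: l2_scale)
  also have "\<dots> = (\<lambda>i. A x i + c * A y i)"
    using assms lin_scale[of A y c] by simp
  finally show ?thesis .
qed

lemma lin_zero:
  assumes "lin A" shows "A (\<lambda>i. 0) = (\<lambda>i. 0)"
  using lin_scale[OF assms l2_zero, of 0] by simp

lemma lin_bound: "lin A \<Longrightarrow> \<exists>K\<ge>0. \<forall>x\<in>l2. nr (A x) \<le> K * nr x"
proof -
  assume "lin A"
  then obtain K where K: "\<forall>x\<in>l2. nr (A x) \<le> K * nr x" unfolding lin_def by blast
  have "nr (A x) \<le> max K 0 * nr x" if "x \<in> l2" for x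
  proof -
    have "nr (A x) \<le> K * nr x" using K that by blast
    also have "\<dots> \<le> max K 0 * nr x" using nr_nonneg[of x] by (intro mult_right_mono) auto
    finally show "nr (A x) \<le> max K 0 * nr x" .
  qed
  then show ?thesis by (intro exI[of _ "max K 0"]) auto
qed

lemma nr_coord:
  assumes "x \<in> l2" shows "(cmod (x i))\<^sup>2 \<le> nr x"
proof -
  have "(\<Sum>j\<in>{i}. (cmod (x j))\<^sup>2) \<le> nr x"
    unfolding nr_def using assms by (intro finite_sum_le_infsum) (auto simp: l2_def)
  then show ?thesis by simp
qed

lemma nr_add_le:
  assumes "x \<in> l2" "y \<in> l2"
  shows "nr (\<lambda>i. x i + c * y i) \<le> 2 * nr x + 2 * (cmod c)\<^sup>2 * nr y"
proof -
  have sx: "(\<lambda>i. (cmod (x i))\<^sup>2) summable_on UNIV" and sy: "(\<lambda>i. (cmod (y i))\<^sup>2) summable_on UNIV"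
    using assms by (auto simp: l2_def)
  have s: "(\<lambda>i. (cmod (x i + c * y i))\<^sup>2) summable_on UNIV"
    using l2_lin2[OF assms, of c] by (simp add: l2_def)
  have b: "(cmod (x i + c * y i))\<^sup>2 \<le> 2 * (cmod (x i))\<^sup>2 + 2 * (cmod c)\<^sup>2 * (cmod (y i))\<^sup>2" for i
  proof -
    have "cmod (x i + c * y i) \<le> cmod (x i) + cmod c * cmod (y i)"
      by (metis norm_mult norm_triangle_ineq)
    then have "(cmod (x i + c * y i))\<^sup>2 \<le> (cmod (x i) + cmod c * cmod (y i))\<^sup>2"
      by (simp add: power_mono)
    also have "\<dots> \<le> 2 * (cmod (x i))\<^sup>2 + 2 * (cmod c)\<^sup>2 * (cmod (y i))\<^sup>2"
    proof -
      have q: "(p + q)\<^sup>2 \<le> 2 * p\<^sup>2 + 2 * q\<^sup>2" for p q :: real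
      proof -
        have "0 \<le> (p - q)\<^sup>2" by simp
        then show ?thesis by (simp add: power2_sum power2_diff)
      qed
      show ?thesis using q[of "cmod (x i)" "cmod c * cmod (y i)"]
        by (simp add: power_mult_distrib mult.assoc)
    qed
    finally show ?thesis .
  qed
  have "nr (\<lambda>i. x i + c * y i) \<le> (\<Sum>\<^sub>\<infinity>i. 2 * (cmod (x i))\<^sup>2 + 2 * (cmod c)\<^sup>2 * (cmod (y i))\<^sup>2)"
    unfolding nr_def using s sx sy b
    by (intro infsum_mono) (auto intro!: summable_on_add summable_on_cmult_right)
  also have "\<dots> = 2 * nr x + 2 * (cmod c)\<^sup>2 * nr y"
    unfolding nr_def using sx sy
    by (subst infsum_add) (auto intro: summable_on_cmult_right simp only: infsum_cmult_right)
  finally show ?thesis .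
qed

lemma lin_shift:
  assumes "lin A"
  shows "lin (\<lambda>x i. A x i - c * x i)"
proof -
  obtain K where K: "K \<ge> 0" "\<forall>x\<in>l2. nr (A x) \<le> K * nr x" using lin_bound[OF assms] by blast
  have l2: "(\<lambda>i. A x i - c * x i) \<in> l2" if "x \<in> l2" for x
    using l2_lin[OF lin_l2[OF assms that] that, of 1 "-c"] by simp
  have add: "(\<lambda>i. A (\<lambda>i. x i + y i) i - c * (x i + y i)) = (\<lambda>i. (A x i - c * x i) + (A y i - c * y i))"
    if "x \<in> l2" "y \<in> l2" for x y
    using lin_add[OF assms that] by (simp add: algebra_simps)
  have sc: "(\<lambda>i. A (\<lambda>i. d * x i) i - c * (d * x i)) = (\<lambda>i. d * (A x i - c * x i))"
    if "x \<in> l2" for x d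
    using lin_scale[OF assms that] by (simp add: algebra_simps)
  have bd: "nr (\<lambda>i. A x i - c * x i) \<le> (2 * K + 2 * (cmod c)\<^sup>2) * nr x" if "x \<in> l2" for x
  proof -
    have "nr (\<lambda>i. A x i - c * x i) = nr (\<lambda>i. A x i + (-c) * x i)" by simp
    also have "\<dots> \<le> 2 * nr (A x) + 2 * (cmod (-c))\<^sup>2 * nr x"
      by (rule nr_add_le[OF lin_l2[OF assms that] that])
    also have "\<dots> \<le> 2 * (K * nr x) + 2 * (cmod c)\<^sup>2 * nr x"
      using K that by simp
    finally show ?thesis by (simp add: algebra_simps)
  qed
  show ?thesis unfolding lin_def using l2 add sc bd by blast
qed

lemma lin_expand:
  assumes A: "lin A" and y: "y \<in> l2"
  shows "((\<lambda>k. y k * A (basis_vec k) i) has_sum A y i) UNIV"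
proof -
  obtain K where K: "K \<ge> 0" "\<forall>x\<in>l2. nr (A x) \<le> K * nr x" using lin_bound[OF A] by blast
  define yF where "yF F = (\<lambda>j. if j \<in> F then y j else 0)" for F
  define zF where "zF F = (\<lambda>j. if j \<in> F then 0 else y j)" for F
  have yF_l2: "yF F \<in> l2" for F by (rule l2_mono[OF y]) (simp add: yF_def)
  have zF_l2: "zF F \<in> l2" for F by (rule l2_mono[OF y]) (simp add: zF_def)
  have fin: "A (yF F) = (\<lambda>i. \<Sum>k\<in>F. y k * A (basis_vec k) i)" if "finite F" for F
    using that
  proof (induction F rule: finite_induct)
    case empty
    have "yF {} = (\<lambda>i. 0)" by (simp add: yF_def)
    then show ?case using lin_zero[OF A] by simp
  next
    case (insert k F)
    have "yF (insert k F) = (\<lambda>j. yF F j + y k * basis_vec k j)"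
      using insert(2) by (auto simp: yF_def basis_vec_def)
    then have "A (yF (insert k F)) = (\<lambda>i. A (yF F) i + y k * A (basis_vec k) i)"
      using lin_comb[OF A yF_l2 l2_basis] by simp
    then show ?case using insert by (simp add: add.commute)
  qed
  have split: "A y i = A (yF F) i + A (zF F) i" for F
  proof -
    have "y = (\<lambda>j. yF F j + zF F j)" by (auto simp: yF_def zF_def)
    then have "A y = A (\<lambda>j. yF F j + zF F j)" by simp
    also have "\<dots> = (\<lambda>i. A (yF F) i + A (zF F) i)" by (rule lin_add[OF A yF_l2 zF_l2])
    finally show ?thesis by simp
  qed
  have sy: "(\<lambda>j. (cmod (y j))\<^sup>2) summable_on UNIV" using y by (simp add: l2_def)
  have nrz: "nr (zF F) = nr y - (\<Sum>j\<in>F. (cmod (y j))\<^sup>2)" if "finite F" for F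
  proof -
    have sz: "(\<lambda>j. (cmod (zF F j))\<^sup>2) summable_on UNIV" using zF_l2 by (simp add: l2_def)
    have syF: "(\<lambda>j. (cmod (yF F j))\<^sup>2) summable_on UNIV" using yF_l2 by (simp add: l2_def)
    have "nr y = (\<Sum>\<^sub>\<infinity>j. (cmod (yF F j))\<^sup>2 + (cmod (zF F j))\<^sup>2)"
      unfolding nr_def by (rule infsum_cong) (simp add: yF_def zF_def)
    also have "\<dots> = (\<Sum>\<^sub>\<infinity>j. (cmod (yF F j))\<^sup>2) + nr (zF F)"
      unfolding nr_def by (rule infsum_add[OF syF sz])
    also have "(\<Sum>\<^sub>\<infinity>j. (cmod (yF F j))\<^sup>2) = (\<Sum>\<^sub>\<infinity>j\<in>F. (cmod (y j))\<^sup>2)"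
      by (rule infsum_cong_neutral) (auto simp: yF_def)
    also have "\<dots> = (\<Sum>j\<in>F. (cmod (y j))\<^sup>2)" using that by simp
    finally show ?thesis by simp
  qed
  have lim1: "((\<lambda>F. \<Sum>j\<in>F. (cmod (y j))\<^sup>2) \<longlongrightarrow> nr y) (finite_subsets_at_top UNIV)"
    using has_sum_infsum[OF sy] unfolding has_sum_def nr_def by simp
  have lim2: "((\<lambda>F. nr (zF F)) \<longlongrightarrow> 0) (finite_subsets_at_top UNIV)"
  proof -
    have "((\<lambda>F. nr y - (\<Sum>j\<in>F. (cmod (y j))\<^sup>2)) \<longlongrightarrow> nr y - nr y) (finite_subsets_at_top UNIV)"
      by (intro tendsto_intros lim1)
    then have "((\<lambda>F. nr y - (\<Sum>j\<in>F. (cmod (y j))\<^sup>2)) \<longlongrightarrow> 0) (finite_subsets_at_top UNIV)" by simp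
    then show ?thesis
      by (rule Lim_transform_eventually) (auto intro!: eventually_finite_subsets_at_top_weakI simp: nrz)
  qed
  have lim3: "((\<lambda>F. A (zF F) i) \<longlongrightarrow> 0) (finite_subsets_at_top UNIV)"
  proof (rule Lim_null_comparison)
    show "\<forall>\<^sub>F F in finite_subsets_at_top UNIV. norm (A (zF F) i) \<le> sqrt (K * nr (zF F))"
    proof (intro always_eventually allI)
      fix F
      have "(cmod (A (zF F) i))\<^sup>2 \<le> nr (A (zF F))" by (rule nr_coord[OF lin_l2[OF A zF_l2]])
      also have "\<dots> \<le> K * nr (zF F)" using K zF_l2 by blast
      finally show "norm (A (zF F) i) \<le> sqrt (K * nr (zF F))" by (simp add: real_le_rsqrt)
    qed
    have "((\<lambda>F. sqrt (K * nr (zF F))) \<longlongrightarrow> sqrt (K * 0)) (finite_subsets_at_top UNIV)"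
      by (intro tendsto_intros lim2)
    then show "((\<lambda>F. sqrt (K * nr (zF F))) \<longlongrightarrow> 0) (finite_subsets_at_top UNIV)" by simp
  qed
  have "((\<lambda>F. A y i - A (zF F) i) \<longlongrightarrow> A y i - 0) (finite_subsets_at_top UNIV)"
    by (intro tendsto_intros lim3)
  then have "((\<lambda>F. A y i - A (zF F) i) \<longlongrightarrow> A y i) (finite_subsets_at_top UNIV)"
    by simp
  moreover have "A y i - A (zF F) i = (\<Sum>k\<in>F. y k * A (basis_vec k) i)" if "finite F" for F
    using fin[OF that] split[of F] by simp
  then have "\<forall>\<^sub>F F in finite_subsets_at_top UNIV. A y i - A (zF F) i = (\<Sum>k\<in>F. y k * A (basis_vec k) i)"
    by (intro eventually_finite_subsets_at_top_weakI) simp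
  ultimately have "((\<lambda>F. \<Sum>k\<in>F. y k * A (basis_vec k) i) \<longlongrightarrow> A y i) (finite_subsets_at_top UNIV)"
    by (rule Lim_transform_eventually)
  then show ?thesis unfolding has_sum_def .
qed


lemma nr_scale: "x \<in> l2 \<Longrightarrow> nr (\<lambda>i. c * x i) = (cmod c)\<^sup>2 * nr x"
  unfolding nr_def l2_def
  by (simp add: norm_mult power_mult_distrib infsum_cmult_right)

lemma nr_parallelogram:
  assumes "u \<in> l2" "v \<in> l2"
  shows "nr (\<lambda>i. u i + v i) + nr (\<lambda>i. u i + (-1) * v i) = 2 * nr u + 2 * nr v"
proof -
  have s1: "(\<lambda>i. (cmod (u i + v i))\<^sup>2) summable_on UNIV"
    using l2_add[OF assms] by (simp add: l2_def)
  have s2: "(\<lambda>i. (cmod (u i + (-1) * v i))\<^sup>2) summable_on UNIV"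
    using l2_lin2[OF assms, of "-1"] by (simp add: l2_def)
  have su: "(\<lambda>i. (cmod (u i))\<^sup>2) summable_on UNIV" and sv: "(\<lambda>i. (cmod (v i))\<^sup>2) summable_on UNIV"
    using assms by (auto simp: l2_def)
  have p: "(cmod (a + b))\<^sup>2 + (cmod (a + (-1) * b))\<^sup>2 = 2 * (cmod a)\<^sup>2 + 2 * (cmod b)\<^sup>2" for a b :: complex
    unfolding cmod_power2 by (simp add: power2_eq_square algebra_simps)
  have "nr (\<lambda>i. u i + v i) + nr (\<lambda>i. u i + (-1) * v i)
      = (\<Sum>\<^sub>\<infinity>i. (cmod (u i + v i))\<^sup>2 + (cmod (u i + (-1) * v i))\<^sup>2)"
    unfolding nr_def by (rule infsum_add[OF s1 s2, symmetric])
  also have "\<dots> = (\<Sum>\<^sub>\<infinity>i. 2 * (cmod (u i))\<^sup>2 + 2 * (cmod (v i))\<^sup>2)"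
    using p by simp
  also have "\<dots> = 2 * nr u + 2 * nr v"
    unfolding nr_def using su sv
    by (subst infsum_add) (auto intro: summable_on_cmult_right simp only: infsum_cmult_right)
  finally show ?thesis .
qed

lemma quad_expand:
  assumes R: "lin R" and x: "x \<in> l2" and y: "y \<in> l2"
  shows "l2_inner (\<lambda>i. x i + c * y i) (R (\<lambda>i. x i + c * y i))
     = l2_inner x (R x) + c * l2_inner x (R y) + cnj c * l2_inner y (R x) + cnj c * c * l2_inner y (R y)"
proof -
  have "R (\<lambda>i. x i + c * y i) = (\<lambda>i. R x i + c * R y i)" by (rule lin_comb[OF R x y])
  then show ?thesis
    using ip_sesq[OF x y lin_l2[OF R x] lin_l2[OF R y], of c c] by simp
qed

lemma herm:
  assumes R: "lin R" and im: "\<forall>x\<in>l2. Im (l2_inner x (R x)) = 0" and x: "x \<in> l2" and y: "y \<in> l2"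
  shows "l2_inner x (R y) = cnj (l2_inner y (R x))"
proof -
  have i1: "Im (l2_inner (\<lambda>i. x i + 1 * y i) (R (\<lambda>i. x i + 1 * y i))) = 0"
    using im l2_lin2[OF x y] by blast
  have i2: "Im (l2_inner (\<lambda>i. x i + \<i> * y i) (R (\<lambda>i. x i + \<i> * y i))) = 0"
    using im l2_lin2[OF x y] by blast
  have ix: "Im (l2_inner x (R x)) = 0" and iy: "Im (l2_inner y (R y)) = 0" using im x y by auto
  have a: "Im (l2_inner x (R y)) + Im (l2_inner y (R x)) = 0"
    using i1 ix iy unfolding quad_expand[OF R x y] by simp
  have b: "Re (l2_inner x (R y)) - Re (l2_inner y (R x)) = 0"
    using i2 ix iy unfolding quad_expand[OF R x y] by simp
  show ?thesis using a b by (intro complex_eqI) auto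
qed

lemma selfadj_bound:
  assumes R: "lin R" and im: "\<forall>x\<in>l2. Im (l2_inner x (R x)) = 0"
    and re: "\<forall>x\<in>l2. \<bar>Re (l2_inner x (R x))\<bar> \<le> M * nr x" and M: "M \<ge> 0" and u: "u \<in> l2"
  shows "nr (R u) \<le> M\<^sup>2 * nr u"
proof -
  have key: "4 * Re (l2_inner v (R u)) \<le> 2 * M * nr u + 2 * M * nr v" if v: "v \<in> l2" for v
  proof -
    have e1: "Re (l2_inner (\<lambda>i. u i + 1 * v i) (R (\<lambda>i. u i + 1 * v i)))
        = Re (l2_inner u (R u)) + Re (l2_inner u (R v)) + Re (l2_inner v (R u)) + Re (l2_inner v (R v))"
      unfolding quad_expand[OF R u v] by simp
    have e2: "Re (l2_inner (\<lambda>i. u i + (-1) * v i) (R (\<lambda>i. u i + (-1) * v i)))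
        = Re (l2_inner u (R u)) - Re (l2_inner u (R v)) - Re (l2_inner v (R u)) + Re (l2_inner v (R v))"
      unfolding quad_expand[OF R u v] by simp
    have h: "Re (l2_inner u (R v)) = Re (l2_inner v (R u))"
      using herm[OF R im u v] by simp
    have b1: "Re (l2_inner (\<lambda>i. u i + 1 * v i) (R (\<lambda>i. u i + 1 * v i))) \<le> M * nr (\<lambda>i. u i + 1 * v i)"
      using re l2_lin2[OF u v, of 1] by fastforce
    have b2: "- Re (l2_inner (\<lambda>i. u i + (-1) * v i) (R (\<lambda>i. u i + (-1) * v i))) \<le> M * nr (\<lambda>i. u i + (-1) * v i)"
      using re l2_lin2[OF u v, of "-1"] by fastforce
    have "4 * Re (l2_inner v (R u)) \<le> M * nr (\<lambda>i. u i + 1 * v i) + M * nr (\<lambda>i. u i + (-1) * v i)"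
      using e1 e2 h b1 b2 by linarith
    also have "\<dots> = M * (nr (\<lambda>i. u i + v i) + nr (\<lambda>i. u i + (-1) * v i))"
      by (simp add: algebra_simps)
    also have "\<dots> = 2 * M * nr u + 2 * M * nr v"
      unfolding nr_parallelogram[OF u v] by (simp add: algebra_simps)
    finally show ?thesis .
  qed
  have Ru: "R u \<in> l2" by (rule lin_l2[OF R u])
  define N where "N = nr (R u)"
  have N0: "N \<ge> 0" unfolding N_def by (rule nr_nonneg)
  have kt: "4 * t * N \<le> 2 * M * nr u + 2 * M * (t\<^sup>2 * N)" if t: "t \<ge> 0" for t :: real
  proof -
    have v: "(\<lambda>i. complex_of_real t * R u i) \<in> l2" by (rule l2_scale[OF Ru])
    have "l2_inner (\<lambda>i. complex_of_real t * R u i) (R u) = complex_of_real t * l2_inner (R u) (R u)"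
      using ip_sesq[OF l2_zero Ru Ru l2_zero, of "complex_of_real t" 0] by (simp add: l2_inner_def)
    then have "Re (l2_inner (\<lambda>i. complex_of_real t * R u i) (R u)) = t * N"
      unfolding N_def ip_self[OF Ru] by simp
    moreover have "nr (\<lambda>i. complex_of_real t * R u i) = t\<^sup>2 * N"
      unfolding N_def nr_scale[OF Ru] by simp
    ultimately show ?thesis using key[OF v] by (simp add: mult.assoc)
  qed
  show ?thesis
  proof (cases "M = 0")
    case True
    then have "4 * N \<le> 0" using kt[of 1] by simp
    then show ?thesis using True N_def by simp
  next
    case False
    then have Mp: "M > 0" using M by simp
    have "4 * (1/M) * N \<le> 2 * M * nr u + 2 * M * ((1/M)\<^sup>2 * N)" using kt[of "1/M"] Mp by simp
    also have "2 * M * ((1/M)\<^sup>2 * N) = 2 * (1/M) * N" using Mp by (simp add: power2_eq_square field_simps)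
    finally have "2 * (1/M) * N \<le> 2 * M * nr u" by simp
    then have "N / M \<le> M * nr u" by simp
    then have "N \<le> M * nr u * M" using Mp by (simp add: divide_le_eq)
    then show ?thesis unfolding N_def by (simp add: power2_eq_square algebra_simps)
  qed
qed


lemma enn_infsum_cmult:
  fixes f :: "'a \<Rightarrow> ennreal"
  assumes "c < top"
  shows "(\<Sum>\<^sub>\<infinity>x\<in>A. c * f x) = c * (\<Sum>\<^sub>\<infinity>x\<in>A. f x)"
proof -
  have "(f has_sum (\<Sum>\<^sub>\<infinity>x\<in>A. f x)) A"
    by (rule has_sum_infsum) (simp add: nonneg_summable_on_complete)
  then have "((\<lambda>F. c * sum f F) \<longlongrightarrow> c * (\<Sum>\<^sub>\<infinity>x\<in>A. f x)) (finite_subsets_at_top A)"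
    unfolding has_sum_def by (rule ennreal_tendsto_cmult[OF assms])
  then have "((\<lambda>x. c * f x) has_sum c * (\<Sum>\<^sub>\<infinity>x\<in>A. f x)) A"
    unfolding has_sum_def by (simp add: sum_distrib_left)
  then show ?thesis by (rule infsumI)
qed

lemma enn_single_le:
  fixes f :: "'a \<Rightarrow> ennreal"
  shows "f i \<le> (\<Sum>\<^sub>\<infinity>x. f x)"
  using enn_sum_le_infsum[of "{i}" UNIV f] by simp

lemma rows:
  assumes "hs_sq A < \<infinity>"
  shows "(\<Sum>\<^sub>\<infinity>i. nu (\<lambda>k. cnj (A (basis_vec k) i))) = hs_sq A"
    and "(\<lambda>k. cnj (A (basis_vec k) i)) \<in> l2"
proof -
  have "(\<Sum>\<^sub>\<infinity>i. nu (\<lambda>k. cnj (A (basis_vec k) i)))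
      = (\<Sum>\<^sub>\<infinity>i. \<Sum>\<^sub>\<infinity>k. ennreal ((cmod (A (basis_vec k) i))\<^sup>2))"
    by (simp add: nu_def)
  also have "\<dots> = (\<Sum>\<^sub>\<infinity>k. \<Sum>\<^sub>\<infinity>i. ennreal ((cmod (A (basis_vec k) i))\<^sup>2))"
    by (rule ennreal_swap)
  finally show e: "(\<Sum>\<^sub>\<infinity>i. nu (\<lambda>k. cnj (A (basis_vec k) i))) = hs_sq A"
    by (simp add: hs_sq_def)
  have "nu (\<lambda>k. cnj (A (basis_vec k) i)) \<le> hs_sq A"
    using enn_single_le[of "\<lambda>i. nu (\<lambda>k. cnj (A (basis_vec k) i))" i] e by simp
  then show "(\<lambda>k. cnj (A (basis_vec k) i)) \<in> l2"
    using assms by (intro nu_l2) auto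
qed

lemma hs_bound:
  assumes S: "lin S" and hs: "hs_sq S < \<infinity>" and x: "x \<in> l2"
  shows "nu (S x) \<le> hs_sq S * nu x"
proof -
  define r where "r i = (\<lambda>k. cnj (S (basis_vec k) i))" for i
  have r_l2: "r i \<in> l2" for i unfolding r_def by (rule rows(2)[OF hs])
  have Sx: "S x i = l2_inner (r i) x" for i
  proof -
    have "S x i = (\<Sum>\<^sub>\<infinity>k. x k * S (basis_vec k) i)"
      using lin_expand[OF S x, of i] by (simp add: infsumI)
    also have "\<dots> = l2_inner (r i) x" unfolding l2_inner_def r_def by (simp add: mult.commute)
    finally show ?thesis .
  qed
  have "nu (S x) = (\<Sum>\<^sub>\<infinity>i. ennreal ((cmod (S x i))\<^sup>2))" by (simp add: nu_def)
  also have "\<dots> \<le> (\<Sum>\<^sub>\<infinity>i. nu x * nu (r i))"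
  proof (rule infsum_mono)
    fix i
    have "(cmod (S x i))\<^sup>2 \<le> nr (r i) * nr x" unfolding Sx by (rule ip_cs[OF r_l2 x])
    then have "ennreal ((cmod (S x i))\<^sup>2) \<le> ennreal (nr (r i) * nr x)" by (rule ennreal_leI)
    also have "\<dots> = nu x * nu (r i)"
      by (simp add: l2_nu[OF x] l2_nu[OF r_l2] ennreal_mult[OF nr_nonneg nr_nonneg] mult.commute)
    finally show "ennreal ((cmod (S x i))\<^sup>2) \<le> nu x * nu (r i)" .
  qed (simp_all add: nonneg_summable_on_complete)
  also have "\<dots> = nu x * hs_sq S"
    using enn_infsum_cmult[where c="nu x" and A=UNIV and f="\<lambda>i. nu (r i)"] l2_nu[OF x] rows(1)[OF hs]
    by (simp add: r_def)
  finally show ?thesis by (simp add: mult.commute)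
qed

lemma right_bound:
  assumes X: "lin X" and hs: "hs_sq X < \<infinity>" and R: "lin R"
    and h: "\<forall>x\<in>l2. \<forall>y\<in>l2. l2_inner x (R y) = cnj (l2_inner y (R x))"
    and bd: "\<forall>w\<in>l2. nr (R w) \<le> M2 * nr w" and M2: "M2 \<ge> 0"
  shows "(\<Sum>\<^sub>\<infinity>j. nu (X (R (basis_vec j)))) \<le> ennreal M2 * hs_sq X"
proof -
  define w where "w i = (\<lambda>k. cnj (X (basis_vec k) i))" for i
  have w_l2: "w i \<in> l2" for i unfolding w_def by (rule rows(2)[OF hs])
  have Re_l2: "R (basis_vec j) \<in> l2" for j by (rule lin_l2[OF R l2_basis])
  have eq: "cmod (X (R (basis_vec j)) i) = cmod (R (w i) j)" for i j
  proof -
    have h1: "((\<lambda>k. R (basis_vec j) k * X (basis_vec k) i) has_sum X (R (basis_vec j)) i) UNIV"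
      by (rule lin_expand[OF X Re_l2])
    have h2: "((\<lambda>k. w i k * R (basis_vec k) j) has_sum R (w i) j) UNIV"
      by (rule lin_expand[OF R w_l2])
    have rk: "R (basis_vec k) j = cnj (R (basis_vec j) k)" for k
    proof -
      have "R (basis_vec k) j = l2_inner (basis_vec j) (R (basis_vec k))" by (simp add: ip_basis)
      also have "\<dots> = cnj (l2_inner (basis_vec k) (R (basis_vec j)))"
        by (rule h[rule_format, OF l2_basis l2_basis])
      also have "\<dots> = cnj (R (basis_vec j) k)" by (simp add: ip_basis)
      finally show ?thesis .
    qed
    have "((\<lambda>k. cnj (R (basis_vec j) k * X (basis_vec k) i)) has_sum cnj (X (R (basis_vec j)) i)) UNIV"
      by (rule has_sum_cnj_iff[THEN iffD2, OF h1])
    moreover have "(\<lambda>k. cnj (R (basis_vec j) k * X (basis_vec k) i)) = (\<lambda>k. w i k * R (basis_vec k) j)"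
      by (auto simp: w_def rk)
    ultimately have "R (w i) j = cnj (X (R (basis_vec j)) i)"
      using h2 has_sum_unique by metis
    then show ?thesis by simp
  qed
  have "(\<Sum>\<^sub>\<infinity>j. nu (X (R (basis_vec j)))) = (\<Sum>\<^sub>\<infinity>j. \<Sum>\<^sub>\<infinity>i. ennreal ((cmod (R (w i) j))\<^sup>2))"
    by (simp add: nu_def eq)
  also have "\<dots> = (\<Sum>\<^sub>\<infinity>i. \<Sum>\<^sub>\<infinity>j. ennreal ((cmod (R (w i) j))\<^sup>2))"
    by (rule ennreal_swap)
  also have "\<dots> = (\<Sum>\<^sub>\<infinity>i. nu (R (w i)))"
    by (simp add: nu_def)
  also have "\<dots> \<le> (\<Sum>\<^sub>\<infinity>i. ennreal M2 * nu (w i))"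
  proof (rule infsum_mono)
    fix i
    have "nu (R (w i)) = ennreal (nr (R (w i)))" by (rule l2_nu[OF lin_l2[OF R w_l2]])
    also have "\<dots> \<le> ennreal (M2 * nr (w i))" using bd w_l2 by (intro ennreal_leI) blast
    also have "\<dots> = ennreal M2 * nu (w i)" by (simp add: l2_nu[OF w_l2] ennreal_mult[OF M2 nr_nonneg])
    finally show "nu (R (w i)) \<le> ennreal M2 * nu (w i)" .
  qed (simp_all add: nonneg_summable_on_complete)
  also have "\<dots> = ennreal M2 * hs_sq X"
    using enn_infsum_cmult[where c="ennreal M2" and A=UNIV and f="\<lambda>i. nu (w i)"] rows(1)[OF hs]
    by (simp add: w_def)
  finally show ?thesis .
qed


lemma esqrt_sq: "(esqrt a)\<^sup>2 = a"
proof (cases "a = \<infinity>")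
  case True then show ?thesis by (simp add: esqrt_def power2_eq_square)
next
  case False
  have "(esqrt a)\<^sup>2 = ennreal ((sqrt (enn2real a))\<^sup>2)"
    using False by (simp add: esqrt_def ennreal_power)
  also have "\<dots> = a" using False by (simp add: ennreal_enn2real_if less_top)
  finally show ?thesis .
qed

lemma esqrt_ennreal: "r \<ge> 0 \<Longrightarrow> esqrt (ennreal r) = ennreal (sqrt r)"
  by (simp add: esqrt_def)

lemma esqrt_mono: "a \<le> b \<Longrightarrow> esqrt a \<le> esqrt b"
proof (cases "b = \<infinity>")
  case True then show ?thesis by (simp add: esqrt_def)
next
  case False
  assume ab: "a \<le> b"
  then have "a \<noteq> \<infinity>" using False by (auto simp: top_unique)
  then show ?thesis using False ab
    by (auto simp: esqrt_def less_top intro!: ennreal_leI real_sqrt_le_mono enn2real_mono)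
qed

lemma esqrt_mult: "esqrt (a * b) = esqrt a * esqrt b"
proof (cases "a = 0 \<or> b = 0")
  case True then show ?thesis by (auto simp: esqrt_def)
next
  case F: False
  show ?thesis
  proof (cases "a = \<infinity> \<or> b = \<infinity>")
    case True
    then have "a * b = \<infinity>" using F by (auto simp: ennreal_mult_eq_top_iff)
    moreover have "esqrt a * esqrt b = \<infinity>"
    proof -
      have "esqrt a \<noteq> 0" using F by (auto simp: esqrt_def enn2real_eq_0_iff)
      moreover have "esqrt b \<noteq> 0" using F by (auto simp: esqrt_def enn2real_eq_0_iff)
      ultimately show ?thesis using True by (auto simp: esqrt_def ennreal_mult_eq_top_iff)
    qed
    ultimately show ?thesis by (simp add: esqrt_def)
  next
    case False
    define r where "r = enn2real a"
    define s where "s = enn2real b"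
    have r: "a = ennreal r" "r \<ge> 0" using False by (auto simp: r_def ennreal_enn2real_if less_top)
    have s: "b = ennreal s" "s \<ge> 0" using False by (auto simp: s_def ennreal_enn2real_if less_top)
    have "esqrt (a * b) = esqrt (ennreal (r * s))" using r s by (simp add: ennreal_mult)
    also have "\<dots> = ennreal (sqrt (r * s))" using r s by (intro esqrt_ennreal) simp
    also have "\<dots> = ennreal (sqrt r) * ennreal (sqrt s)" using r s by (simp add: real_sqrt_mult ennreal_mult)
    also have "\<dots> = esqrt a * esqrt b" using r s by (simp add: esqrt_ennreal)
    finally show ?thesis .
  qed
qed

lemma hs_zero_cols:
  assumes "hs_sq A = 0" shows "A (basis_vec j) = (\<lambda>i. 0)"
proof -
  have "nu (A (basis_vec j)) \<le> hs_sq A"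
    unfolding hs_sq_def nu_def by (rule enn_single_le)
  then have "nu (A (basis_vec j)) = 0" using assms by simp
  then have "ennreal ((cmod (A (basis_vec j) i))\<^sup>2) = 0" for i
    using enn_single_le[of "\<lambda>i. ennreal ((cmod (A (basis_vec j) i))\<^sup>2)" i]
    unfolding nu_def by simp
  then show ?thesis by (auto simp: fun_eq_iff)
qed

lemma zero_op:
  assumes A: "lin A" and z: "\<And>j. A (basis_vec j) = (\<lambda>i. 0)" and x: "x \<in> l2"
  shows "A x = (\<lambda>i. 0)"
proof
  fix i
  have "A x i = (\<Sum>\<^sub>\<infinity>k. x k * A (basis_vec k) i)"
    using lin_expand[OF A x, of i] by (simp add: infsumI)
  also have "\<dots> = 0" by (simp add: z)
  finally show "A x i = 0" .
qed

lemma hs_sq_nu: "hs_sq A = (\<Sum>\<^sub>\<infinity>j. nu (A (basis_vec j)))"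
  by (simp add: hs_sq_def nu_def)

lemma nu_diff_le: "nu (\<lambda>i. u i - v i) \<le> 2 * nu u + 2 * nu v"
proof -
  have p: "ennreal ((cmod (u i - v i))\<^sup>2) \<le> 2 * ennreal ((cmod (u i))\<^sup>2) + 2 * ennreal ((cmod (v i))\<^sup>2)" for i
  proof -
    have "cmod (u i - v i) \<le> cmod (u i) + cmod (v i)" by (rule norm_triangle_ineq4)
    then have "(cmod (u i - v i))\<^sup>2 \<le> (cmod (u i) + cmod (v i))\<^sup>2" by (simp add: power_mono)
    also have "\<dots> \<le> 2 * (cmod (u i))\<^sup>2 + 2 * (cmod (v i))\<^sup>2"
    proof -
      have "0 \<le> (cmod (u i) - cmod (v i))\<^sup>2" by simp
      then show ?thesis by (simp add: power2_sum power2_diff)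
    qed
    finally have "ennreal ((cmod (u i - v i))\<^sup>2) \<le> ennreal (2 * (cmod (u i))\<^sup>2 + 2 * (cmod (v i))\<^sup>2)"
      by (rule ennreal_leI)
    also have "\<dots> = 2 * ennreal ((cmod (u i))\<^sup>2) + 2 * ennreal ((cmod (v i))\<^sup>2)"
      by (subst ennreal_plus) (auto simp: ennreal_mult)
    finally show ?thesis .
  qed
  have "nu (\<lambda>i. u i - v i) \<le> (\<Sum>\<^sub>\<infinity>i. 2 * ennreal ((cmod (u i))\<^sup>2) + 2 * ennreal ((cmod (v i))\<^sup>2))"
    unfolding nu_def by (rule infsum_mono) (use p in \<open>auto simp: nonneg_summable_on_complete\<close>)
  also have "\<dots> = 2 * nu u + 2 * nu v"
    unfolding nu_def
    by (simp add: infsum_add nonneg_summable_on_complete enn_infsum_cmult)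
  finally show ?thesis .
qed

lemma sum_diff_le:
  "(\<Sum>\<^sub>\<infinity>j. nu (\<lambda>i. U j i - V j i)) \<le> 2 * (\<Sum>\<^sub>\<infinity>j. nu (U j)) + 2 * (\<Sum>\<^sub>\<infinity>j. nu (V j))"
proof -
  have "(\<Sum>\<^sub>\<infinity>j. nu (\<lambda>i. U j i - V j i)) \<le> (\<Sum>\<^sub>\<infinity>j. 2 * nu (U j) + 2 * nu (V j))"
    by (rule infsum_mono) (auto simp: nonneg_summable_on_complete nu_diff_le)
  also have "\<dots> = 2 * (\<Sum>\<^sub>\<infinity>j. nu (U j)) + 2 * (\<Sum>\<^sub>\<infinity>j. nu (V j))"
    by (simp add: infsum_add nonneg_summable_on_complete enn_infsum_cmult)
  finally show ?thesis .
qed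


lemma quad_shift:
  assumes S: "lin S" and x: "x \<in> l2"
  shows "l2_inner x (\<lambda>i. S x i - complex_of_real c * x i) = l2_inner x (S x) - complex_of_real (c * nr x)"
proof -
  have Sx: "S x \<in> l2" by (rule lin_l2[OF S x])
  have "l2_inner (\<lambda>i. x i + 0 * 0) (\<lambda>i. S x i + (- complex_of_real c) * x i)
      = l2_inner x (S x) + (- complex_of_real c) * l2_inner x x + cnj 0 * l2_inner (\<lambda>i. 0) (S x)
        + cnj 0 * (- complex_of_real c) * l2_inner (\<lambda>i. 0) x"
    by (rule ip_sesq[OF x l2_zero Sx x])
  then show ?thesis by (simp add: ip_self[OF x])
qed

lemma upper_from_hs:
  assumes S: "lin S" and hs: "hs_sq S < \<infinity>" and x: "x \<in> l2"
  shows "Re (l2_inner x (S x)) \<le> sqrt (enn2real (hs_sq S)) * nr x"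
proof -
  define a where "a = sqrt (enn2real (hs_sq S))"
  have a0: "a \<ge> 0" by (simp add: a_def)
  have a2: "a\<^sup>2 = enn2real (hs_sq S)" by (simp add: a_def)
  have Sx: "S x \<in> l2" by (rule lin_l2[OF S x])
  have "ennreal (nr (S x)) \<le> hs_sq S * ennreal (nr x)"
    using hs_bound[OF S hs x] l2_nu[OF Sx] l2_nu[OF x] by simp
  also have "hs_sq S = ennreal (a\<^sup>2)" using hs a2 by (simp add: ennreal_enn2real_if less_top)
  also have "ennreal (a\<^sup>2) * ennreal (nr x) = ennreal (a\<^sup>2 * nr x)"
    by (simp add: ennreal_mult nr_nonneg)
  finally have n: "nr (S x) \<le> a\<^sup>2 * nr x"
    by (subst (asm) ennreal_le_iff) (auto intro: mult_nonneg_nonneg nr_nonneg)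
  have "(cmod (l2_inner x (S x)))\<^sup>2 \<le> nr x * nr (S x)" by (rule ip_cs[OF x Sx])
  also have "\<dots> \<le> nr x * (a\<^sup>2 * nr x)" using n nr_nonneg by (intro mult_left_mono) auto
  also have "\<dots> = (a * nr x)\<^sup>2" by (simp add: power2_eq_square)
  finally have "cmod (l2_inner x (S x)) \<le> a * nr x"
    by (rule power2_le_imp_le) (simp add: a0 nr_nonneg)
  then show ?thesis unfolding a_def[symmetric] using complex_Re_le_cmod order_trans by blast
qed

lemma shift_bound:
  assumes S: "lin S" and pos: "\<forall>x\<in>l2. Im (l2_inner x (S x)) = 0 \<and> Re (l2_inner x (S x)) \<ge> 0"
    and up: "\<forall>x\<in>l2. Re (l2_inner x (S x)) \<le> a * nr x" and ac: "a \<le> 2 * c" and c: "c \<ge> 0"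
  defines "R \<equiv> (\<lambda>x i. S x i - complex_of_real c * x i)"
  shows "lin R" and "\<forall>x\<in>l2. \<forall>y\<in>l2. l2_inner x (R y) = cnj (l2_inner y (R x))"
    and "\<forall>u\<in>l2. nr (R u) \<le> c\<^sup>2 * nr u"
proof -
  show R: "lin R" unfolding R_def by (rule lin_shift[OF S])
  have q: "l2_inner x (R x) = l2_inner x (S x) - complex_of_real (c * nr x)" if "x \<in> l2" for x
    unfolding R_def by (rule quad_shift[OF S that])
  have im: "\<forall>x\<in>l2. Im (l2_inner x (R x)) = 0" using q pos by simp
  have re0: "\<bar>Re (l2_inner x (R x))\<bar> \<le> c * nr x" if x: "x \<in> l2" for x
  proof -
    have "Re (l2_inner x (R x)) = Re (l2_inner x (S x)) - c * nr x" using q[OF x] by simp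
    moreover have "0 \<le> Re (l2_inner x (S x))" using pos x by blast
    moreover have "Re (l2_inner x (S x)) \<le> a * nr x" using up x by blast
    moreover have "a * nr x \<le> 2 * c * nr x" using ac nr_nonneg[of x] by (intro mult_right_mono) auto
    ultimately show "\<bar>Re (l2_inner x (R x))\<bar> \<le> c * nr x" by linarith
  qed
  have re: "\<forall>x\<in>l2. \<bar>Re (l2_inner x (R x))\<bar> \<le> c * nr x" using re0 by blast
  show "\<forall>x\<in>l2. \<forall>y\<in>l2. l2_inner x (R y) = cnj (l2_inner y (R x))"
    using herm[OF R im] by blast
  show "\<forall>u\<in>l2. nr (R u) \<le> c\<^sup>2 * nr u"
    using selfadj_bound[OF R im re c] by blast
qed


lemma main_finite:
  fixes S T X :: "('i \<Rightarrow> complex) \<Rightarrow> ('i \<Rightarrow> complex)"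
  assumes S: "lin S" and T: "lin T" and X: "lin X"
    and pS: "\<forall>x\<in>l2. Im (l2_inner x (S x)) = 0 \<and> Re (l2_inner x (S x)) \<ge> 0"
    and pT: "\<forall>x\<in>l2. Im (l2_inner x (T x)) = 0 \<and> Re (l2_inner x (T x)) \<ge> 0"
    and fS: "hs_sq S < \<infinity>" and fT: "hs_sq T < \<infinity>" and fX: "hs_sq X < \<infinity>"
  shows "hs_sq (\<lambda>x i. S (X x) i - X (T x) i) \<le> hs_sq X * (hs_sq S + hs_sq T)"
proof -
  define a where "a = sqrt (enn2real (hs_sq S))"
  define b where "b = sqrt (enn2real (hs_sq T))"
  define c where "c = max a b / 2"
  have a0: "a \<ge> 0" and b0: "b \<ge> 0" by (simp_all add: a_def b_def)
  have c0: "c \<ge> 0" using a0 by (simp add: c_def)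
  have ac: "a \<le> 2 * c" and bc: "b \<le> 2 * c" by (simp_all add: c_def)
  define RS where "RS = (\<lambda>x i. S x i - complex_of_real c * x i)"
  define RT where "RT = (\<lambda>x i. T x i - complex_of_real c * x i)"
  have upS: "\<forall>x\<in>l2. Re (l2_inner x (S x)) \<le> a * nr x"
    unfolding a_def using upper_from_hs[OF S fS] by blast
  have upT: "\<forall>x\<in>l2. Re (l2_inner x (T x)) \<le> b * nr x"
    unfolding b_def using upper_from_hs[OF T fT] by blast
  note sbS0 = shift_bound[OF S pS upS ac c0]
  note sbT0 = shift_bound[OF T pT upT bc c0]
  have sbS: "lin RS" "\<forall>x\<in>l2. \<forall>y\<in>l2. l2_inner x (RS y) = cnj (l2_inner y (RS x))"
      "\<forall>u\<in>l2. nr (RS u) \<le> c\<^sup>2 * nr u"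
    unfolding RS_def by (rule sbS0(1), rule sbS0(2), rule sbS0(3))
  have sbT: "lin RT" "\<forall>x\<in>l2. \<forall>y\<in>l2. l2_inner x (RT y) = cnj (l2_inner y (RT x))"
      "\<forall>u\<in>l2. nr (RT u) \<le> c\<^sup>2 * nr u"
    unfolding RT_def by (rule sbT0(1), rule sbT0(2), rule sbT0(3))
  define U where "U j = RS (X (basis_vec j))" for j
  define V where "V j = X (RT (basis_vec j))" for j
  have Xe: "X (basis_vec j) \<in> l2" for j by (rule lin_l2[OF X l2_basis])
  have Te: "T (basis_vec j) \<in> l2" for j by (rule lin_l2[OF T l2_basis])
  have col: "S (X (basis_vec j)) i - X (T (basis_vec j)) i = U j i - V j i" for i j
  proof -
    note lc = lin_comb[OF X Te l2_basis, where c="- complex_of_real c"]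
    have "V j = (\<lambda>i. X (T (basis_vec j)) i - complex_of_real c * X (basis_vec j) i)"
      using lc unfolding V_def RT_def by simp
    then show ?thesis by (simp add: U_def RS_def)
  qed
  have hU: "(\<Sum>\<^sub>\<infinity>j. nu (U j)) \<le> ennreal (c\<^sup>2) * hs_sq X"
  proof -
    have "(\<Sum>\<^sub>\<infinity>j. nu (U j)) \<le> (\<Sum>\<^sub>\<infinity>j. ennreal (c\<^sup>2) * nu (X (basis_vec j)))"
    proof (rule infsum_mono)
      fix j
      have "nu (U j) = ennreal (nr (U j))"
        unfolding U_def by (rule l2_nu[OF lin_l2[OF sbS(1) Xe]])
      also have "\<dots> \<le> ennreal (c\<^sup>2 * nr (X (basis_vec j)))"
        using sbS(3) Xe unfolding U_def by (intro ennreal_leI) blast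
      also have "\<dots> = ennreal (c\<^sup>2) * nu (X (basis_vec j))"
        by (simp add: l2_nu[OF Xe] ennreal_mult[OF _ nr_nonneg])
      finally show "nu (U j) \<le> ennreal (c\<^sup>2) * nu (X (basis_vec j))" .
    qed (simp_all add: nonneg_summable_on_complete)
    also have "\<dots> = ennreal (c\<^sup>2) * hs_sq X"
      unfolding hs_sq_nu by (rule enn_infsum_cmult) simp
    finally show ?thesis .
  qed
  have hV: "(\<Sum>\<^sub>\<infinity>j. nu (V j)) \<le> ennreal (c\<^sup>2) * hs_sq X"
    unfolding V_def by (rule right_bound[OF X fX sbT(1) sbT(2) sbT(3)]) simp
  have "hs_sq (\<lambda>x i. S (X x) i - X (T x) i) = (\<Sum>\<^sub>\<infinity>j. nu (\<lambda>i. U j i - V j i))"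
    unfolding hs_sq_nu by (simp add: col)
  also have "\<dots> \<le> 2 * (\<Sum>\<^sub>\<infinity>j. nu (U j)) + 2 * (\<Sum>\<^sub>\<infinity>j. nu (V j))"
    by (rule sum_diff_le)
  also have "\<dots> \<le> 2 * (ennreal (c\<^sup>2) * hs_sq X) + 2 * (ennreal (c\<^sup>2) * hs_sq X)"
    by (intro add_mono mult_left_mono hU hV) simp_all
  also have "2 * (ennreal (c\<^sup>2) * hs_sq X) + 2 * (ennreal (c\<^sup>2) * hs_sq X)
      = ennreal ((2 * c)\<^sup>2) * hs_sq X"
  proof -
    have e4: "ennreal ((2 * c)\<^sup>2) = 4 * ennreal (c\<^sup>2)"
      by (simp add: power_mult_distrib ennreal_mult)
    have "2 * (ennreal (c\<^sup>2) * hs_sq X) + 2 * (ennreal (c\<^sup>2) * hs_sq X)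
        = (2 + 2) * (ennreal (c\<^sup>2) * hs_sq X)" by (simp only: distrib_right)
    also have "\<dots> = 4 * (ennreal (c\<^sup>2) * hs_sq X)" by simp
    finally have "2 * (ennreal (c\<^sup>2) * hs_sq X) + 2 * (ennreal (c\<^sup>2) * hs_sq X)
        = 4 * (ennreal (c\<^sup>2) * hs_sq X)" .
    then show ?thesis unfolding e4 by (simp only: mult.assoc)
  qed
  also have "\<dots> \<le> ennreal (a\<^sup>2 + b\<^sup>2) * hs_sq X"
  proof (rule mult_right_mono)
    have "(2 * c)\<^sup>2 = (max a b)\<^sup>2" by (simp add: c_def)
    also have "\<dots> \<le> a\<^sup>2 + b\<^sup>2" using a0 b0 by (simp add: max_def)
    finally show "ennreal ((2 * c)\<^sup>2) \<le> ennreal (a\<^sup>2 + b\<^sup>2)" by (rule ennreal_leI)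
  qed simp
  also have "ennreal (a\<^sup>2 + b\<^sup>2) = hs_sq S + hs_sq T"
    using fS fT by (auto simp: a_def b_def ennreal_plus ennreal_enn2real_if less_top)
  finally show ?thesis by (simp add: mult.commute)
qed


lemma main_sq:
  fixes S T X :: "('i \<Rightarrow> complex) \<Rightarrow> ('i \<Rightarrow> complex)"
  assumes S: "lin S" and T: "lin T" and X: "lin X"
    and pS: "\<forall>x\<in>l2. Im (l2_inner x (S x)) = 0 \<and> Re (l2_inner x (S x)) \<ge> 0"
    and pT: "\<forall>x\<in>l2. Im (l2_inner x (T x)) = 0 \<and> Re (l2_inner x (T x)) \<ge> 0"
  shows "hs_sq (\<lambda>x i. S (X x) i - X (T x) i) \<le> hs_sq X * (hs_sq S + hs_sq T)"
proof -
  have zeroD: "hs_sq (\<lambda>x i. S (X x) i - X (T x) i) = 0"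
    if "\<And>j. S (X (basis_vec j)) = X (T (basis_vec j))"
    unfolding hs_sq_nu using that by (simp add: nu_def)
  show ?thesis
  proof (cases "hs_sq X = 0")
    case True
    have Xz: "X x = (\<lambda>i. 0)" if "x \<in> l2" for x
      by (rule zero_op[OF X hs_zero_cols[OF True] that])
    have "S (X (basis_vec j)) = X (T (basis_vec j))" for j
      using Xz[OF l2_basis] Xz[OF lin_l2[OF T l2_basis]] lin_zero[OF S] by simp
    then show ?thesis using zeroD by simp
  next
    case X0: False
    show ?thesis
    proof (cases "hs_sq S + hs_sq T = 0")
      case True
      then have S0: "hs_sq S = 0" and T0: "hs_sq T = 0" by auto
      have Sz: "S x = (\<lambda>i. 0)" if "x \<in> l2" for x
        by (rule zero_op[OF S hs_zero_cols[OF S0] that])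
      have "S (X (basis_vec j)) = X (T (basis_vec j))" for j
        using Sz[OF lin_l2[OF X l2_basis]] hs_zero_cols[OF T0, of j] lin_zero[OF X] by simp
      then show ?thesis using zeroD by simp
    next
      case ST0: False
      show ?thesis
      proof (cases "hs_sq X = \<infinity> \<or> hs_sq S = \<infinity> \<or> hs_sq T = \<infinity>")
        case True
        then have "hs_sq X * (hs_sq S + hs_sq T) = \<infinity>"
          using X0 ST0 by (auto simp: ennreal_mult_eq_top_iff)
        then show ?thesis by simp
      next
        case False
        then show ?thesis
          using main_finite[OF S T X pS pT] by (simp add: less_top)
      qed
    qed
  qed
qed

theorem mainTheorem9:
  fixes S T X :: "('i::countable \<Rightarrow> complex) \<Rightarrow> ('i \<Rightarrow> complex)"
  assumes "bounded_op S" and "bounded_op T" and "bounded_op X"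
    and "positive_op S" and "positive_op T"
  shows "hs_norm (\<lambda>x i. S (X x) i - X (T x) i)
           \<le> hs_norm X * esqrt ((hs_norm S)\<^sup>2 + (hs_norm T)\<^sup>2)"
proof -
  have sq: "hs_sq (\<lambda>x i. S (X x) i - X (T x) i) \<le> hs_sq X * (hs_sq S + hs_sq T)"
    by (rule main_sq[OF bounded_lin[OF assms(1)] bounded_lin[OF assms(2)] bounded_lin[OF assms(3)]])
       (use assms(4,5) in \<open>auto simp: positive_op_def\<close>)
  have "hs_norm (\<lambda>x i. S (X x) i - X (T x) i) \<le> esqrt (hs_sq X * (hs_sq S + hs_sq T))"
    unfolding hs_norm_def by (rule esqrt_mono[OF sq])
  also have "\<dots> = hs_norm X * esqrt ((hs_norm S)\<^sup>2 + (hs_norm T)\<^sup>2)"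
    by (simp add: hs_norm_def esqrt_mult esqrt_sq)
  finally show ?thesis .
qed


end
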